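(* In any quantum resource theory, for every state $\rho_A$ and every channel $\mathcal{M}_{A\to B}$, $$D_{\max}^{\mathfrak{F}}(\mathcal{M}_{A\to B}(\rho_A))\le D_{\max}^{\mathfrak{F}}(\rho_A)+D_{\max}^{\mathfrak{F}}(\mathcal{M}_{A\to B}).$$
   Context: A quantum resource theory specifies sets $\mathfrak{F}(A)$ of free states and $\mathfrak{F}(A\to B)$ of free channels such that applying a free channel to a free state yields a free state. The max-relative entropy of states is $D_{\max}(\rho\Vert\sigma)=\log\min\{\lambda:\rho\le\lambda\sigma\}$ if $\operatorname{supp}\rho\subseteq\operatorname{supp}\sigma$ and $+\infty$ otherwise. For channels, $D_{\max}(\mathcal{M}_{A\to B}\Vert\mathcal{N}_{A\to B})=\sup_{\rho_{RA}}D_{\max}((\mathcal{I}_R\otimes\mathcal{M}_{A\to B})(\rho_{RA})\Vert(\mathcal{I}_R\otimes\mathcal{N}_{A\to B})(\rho_{RA}))$, the supremum over all reference systems $R$ and states $\rho_{RA}$. The resource measures are $D_{\max}^{\mathfrak{F}}(\rho_A)=\inf_{\omega_A\in\mathfrak{F}(A)}D_{\max}(\rho_A\Vert\omega_A)$ and $D_{\max}^{\mathfrak{F}}(\mathcal{M}_{A\to B})=\inf_{\mathcal{N}_{A\to B}\in\mathfrak{F}(A\to B)}D_{\max}(\mathcal{M}_{A\to B}\Vert\mathcal{N}_{A\to B})$. *)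

theory Defs
  imports "Jordan_Normal_Form.Matrix" "HOL-Library.Extended_Real"
begin

text \<open>Finite-dimensional quantum systems: an n-dimensional system has operators
  in carrier_mat n n over the complex numbers.\<close>

definition mtrace :: "complex mat \<Rightarrow> complex" where
  "mtrace A = (\<Sum>i<dim_row A. A $$ (i, i))"

text \<open>Positive semidefinite n x n matrix (Hermitian, nonnegative quadratic form;
  the order on complex numbers is the one of HOL-Library.Complex_Order).\<close>
definition psd :: "nat \<Rightarrow> complex mat \<Rightarrow> bool" where
  "psd n A \<longleftrightarrow> A \<in> carrier_mat n n
     \<and> (\<forall>i<n. \<forall>j<n. A $$ (i, j) = cnj (A $$ (j, i)))
     \<and> (\<forall>v \<in> carrier_vec n. conjugate v \<bullet> (A *\<^sub>v v) \<ge> 0)"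

definition loewner_le :: "nat \<Rightarrow> complex mat \<Rightarrow> complex mat \<Rightarrow> bool" where
  "loewner_le n A B \<longleftrightarrow> psd n (B - A)"

definition density :: "nat \<Rightarrow> complex mat \<Rightarrow> bool" where
  "density n \<rho> \<longleftrightarrow> psd n \<rho> \<and> mtrace \<rho> = 1"

definition supp :: "nat \<Rightarrow> complex mat \<Rightarrow> complex vec set" where
  "supp n A = {A *\<^sub>v v | v. v \<in> carrier_vec n}"

definition Dmax_st :: "nat \<Rightarrow> complex mat \<Rightarrow> complex mat \<Rightarrow> ereal" where
  "Dmax_st n \<rho> \<sigma> =
     (if supp n \<rho> \<subseteq> supp n \<sigma>
      then ereal (log 2 (LEAST t::real. loewner_le n \<rho> (complex_of_real t \<cdot>\<^sub>m \<sigma>)))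
      else \<infinity>)"

text \<open>The (dA x dA)-block (a,b) of an (r*dA) x (r*dA) matrix on R \<otimes> A
  (R the outer tensor factor).\<close>
definition block :: "nat \<Rightarrow> complex mat \<Rightarrow> nat \<Rightarrow> nat \<Rightarrow> complex mat" where
  "block dA X a b = mat dA dA (\<lambda>(k, l). X $$ (a * dA + k, b * dA + l))"

text \<open>(I_R \<otimes> M)(X) for a reference system R of dimension r: applies M blockwise,
  i.e. maps |a><b| \<otimes> Y to |a><b| \<otimes> M(Y).\<close>
definition tensor_id :: "nat \<Rightarrow> nat \<Rightarrow> nat \<Rightarrow> (complex mat \<Rightarrow> complex mat) \<Rightarrow> complex mat \<Rightarrow> complex mat" where
  "tensor_id r dA dB M X =
     mat (r * dB) (r * dB) (\<lambda>(i, j). M (block dA X (i div dB) (j div dB)) $$ (i mod dB, j mod dB))"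

definition is_channel :: "nat \<Rightarrow> nat \<Rightarrow> (complex mat \<Rightarrow> complex mat) \<Rightarrow> bool" where
  "is_channel dA dB M \<longleftrightarrow>
     (\<forall>X \<in> carrier_mat dA dA. M X \<in> carrier_mat dB dB)
   \<and> (\<forall>X \<in> carrier_mat dA dA. \<forall>Y \<in> carrier_mat dA dA. M (X + Y) = M X + M Y)
   \<and> (\<forall>X \<in> carrier_mat dA dA. \<forall>c::complex. M (c \<cdot>\<^sub>m X) = c \<cdot>\<^sub>m M X)
   \<and> (\<forall>X \<in> carrier_mat dA dA. mtrace (M X) = mtrace X)
   \<and> (\<forall>r X. psd (r * dA) X \<longrightarrow> psd (r * dB) (tensor_id r dA dB M X))"

definition Dmax_ch :: "nat \<Rightarrow> nat \<Rightarrow> (complex mat \<Rightarrow> complex mat) \<Rightarrow> (complex mat \<Rightarrow> complex mat) \<Rightarrow> ereal" where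
  "Dmax_ch dA dB M N =
     (SUP (r, \<rho>) \<in> {(r, \<rho>). density (r * dA) \<rho>}.
        Dmax_st (r * dB) (tensor_id r dA dB M \<rho>) (tensor_id r dA dB N \<rho>))"

definition resource_theory ::
  "('s \<Rightarrow> nat) \<Rightarrow> ('s \<Rightarrow> complex mat set) \<Rightarrow> ('s \<Rightarrow> 's \<Rightarrow> (complex mat \<Rightarrow> complex mat) set) \<Rightarrow> bool" where
  "resource_theory sdim FS FC \<longleftrightarrow>
     (\<forall>A. FS A \<subseteq> {\<rho>. density (sdim A) \<rho>})
   \<and> (\<forall>A B. FC A B \<subseteq> {M. is_channel (sdim A) (sdim B) M})
   \<and> (\<forall>A B N \<omega>. N \<in> FC A B \<longrightarrow> \<omega> \<in> FS A \<longrightarrow> N \<omega> \<in> FS B)"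

definition Dmax_free_st :: "('s \<Rightarrow> nat) \<Rightarrow> ('s \<Rightarrow> complex mat set) \<Rightarrow> 's \<Rightarrow> complex mat \<Rightarrow> ereal" where
  "Dmax_free_st sdim FS A \<rho> = (INF \<omega> \<in> FS A. Dmax_st (sdim A) \<rho> \<omega>)"

definition Dmax_free_ch ::
  "('s \<Rightarrow> nat) \<Rightarrow> ('s \<Rightarrow> 's \<Rightarrow> (complex mat \<Rightarrow> complex mat) set) \<Rightarrow> 's \<Rightarrow> 's \<Rightarrow> (complex mat \<Rightarrow> complex mat) \<Rightarrow> ereal" where
  "Dmax_free_ch sdim FC A B M = (INF N \<in> FC A B. Dmax_ch (sdim A) (sdim B) M N)"

end

theory Submission
  imports Defs "Jordan_Normal_Form.Gauss_Jordan_Elimination"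
begin

definition ip :: "nat \<Rightarrow> (nat \<Rightarrow> complex) \<Rightarrow> (nat \<Rightarrow> complex) \<Rightarrow> complex" where
  "ip n x y = (\<Sum>i<n. cnj (x i) * y i)"

definition app :: "nat \<Rightarrow> complex mat \<Rightarrow> (nat \<Rightarrow> complex) \<Rightarrow> (nat \<Rightarrow> complex)" where
  "app n A x = (\<lambda>i. \<Sum>j<n. A $$ (i, j) * x j)"

definition qf :: "nat \<Rightarrow> complex mat \<Rightarrow> (nat \<Rightarrow> complex) \<Rightarrow> complex" where
  "qf n A x = ip n x (app n A x)"

definition adj :: "nat \<Rightarrow> complex mat \<Rightarrow> complex mat" where
  "adj n A = mat n n (\<lambda>(i, j). cnj (A $$ (j, i)))"

definition herm :: "nat \<Rightarrow> complex mat \<Rightarrow> bool" where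
  "herm n A \<longleftrightarrow> (\<forall>i<n. \<forall>j<n. A $$ (i, j) = cnj (A $$ (j, i)))"

lemma ip_cong: "(\<And>i. i < n \<Longrightarrow> x i = x' i) \<Longrightarrow> (\<And>i. i < n \<Longrightarrow> y i = y' i) \<Longrightarrow> ip n x y = ip n x' y'"
  unfolding ip_def by (rule sum.cong) auto

lemma app_cong: "(\<And>i. i < n \<Longrightarrow> x i = x' i) \<Longrightarrow> app n A x = app n A x'"
  unfolding app_def by (intro ext sum.cong) auto

lemma ip_conj: "ip n y x = cnj (ip n x y)"
  unfolding ip_def by (simp add: mult.commute)

lemma ip_self_real: "ip n x x = complex_of_real (\<Sum>i<n. (cmod (x i))\<^sup>2)"
proof -
  have "ip n x x = (\<Sum>i<n. complex_of_real ((cmod (x i))\<^sup>2))"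
    unfolding ip_def by (intro sum.cong refl) (metis complex_norm_square mult.commute)
  then show ?thesis by simp
qed

lemma ip_self_ge0: "Re (ip n x x) \<ge> 0"
  by (simp add: ip_self_real sum_nonneg)

lemma ip_self_zero: "Re (ip n x x) = 0 \<Longrightarrow> i < n \<Longrightarrow> x i = 0"
  unfolding ip_self_real by (simp add: sum_nonneg_eq_0_iff)

lemma ip_add_right: "ip n x (\<lambda>i. y i + z i) = ip n x y + ip n x z"
  unfolding ip_def by (simp add: distrib_left sum.distrib)
lemma ip_add_left: "ip n (\<lambda>i. y i + z i) x = ip n y x + ip n z x"
  unfolding ip_def by (simp add: distrib_right sum.distrib)
lemma ip_diff_right: "ip n x (\<lambda>i. y i - z i) = ip n x y - ip n x z"
  unfolding ip_def by (simp add: right_diff_distrib sum_subtractf)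
lemma ip_diff_left: "ip n (\<lambda>i. y i - z i) x = ip n y x - ip n z x"
  unfolding ip_def by (simp add: left_diff_distrib sum_subtractf)
lemma ip_smult_right: "ip n x (\<lambda>i. c * y i) = c * ip n x y"
  unfolding ip_def by (simp add: sum_distrib_left algebra_simps)
lemma ip_smult_left: "ip n (\<lambda>i. c * y i) x = cnj c * ip n y x"
  unfolding ip_def by (simp add: sum_distrib_left algebra_simps)

lemma app_add: "app n A (\<lambda>i. x i + y i) = (\<lambda>i. app n A x i + app n A y i)"
  unfolding app_def by (simp add: distrib_left sum.distrib)
lemma app_diff: "app n A (\<lambda>i. x i - y i) = (\<lambda>i. app n A x i - app n A y i)"
  unfolding app_def by (simp add: right_diff_distrib sum_subtractf)
lemma app_smult: "app n A (\<lambda>i. c * x i) = (\<lambda>i. c * app n A x i)"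
  unfolding app_def by (simp add: sum_distrib_left algebra_simps)

lemma ip_adj: "ip n x (app n A y) = ip n (app n (adj n A) x) y"
proof -
  have "ip n x (app n A y) = (\<Sum>i<n. \<Sum>j<n. cnj (x i) * (A $$ (i, j) * y j))"
    unfolding ip_def app_def by (simp add: sum_distrib_left)
  also have "\<dots> = (\<Sum>j<n. \<Sum>i<n. cnj (x i) * (A $$ (i, j) * y j))"
    by (rule sum.swap)
  also have "\<dots> = (\<Sum>j<n. (\<Sum>i<n. cnj (adj n A $$ (j, i) * x i)) * y j)"
    unfolding sum_distrib_right
  proof (intro sum.cong refl)
    fix j i assume "j \<in> {..<n}" "i \<in> {..<n}"
    then show "cnj (x i) * (A $$ (i, j) * y j) = cnj (adj n A $$ (j, i) * x i) * y j"
      by (simp add: adj_def)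
  qed
  also have "\<dots> = ip n (app n (adj n A) x) y"
    unfolding ip_def app_def by simp
  finally show ?thesis .
qed

lemma adj_herm: "herm n A \<Longrightarrow> i < n \<Longrightarrow> app n (adj n A) x i = app n A x i"
  unfolding app_def herm_def adj_def by (intro sum.cong refl) (metis index_mat(1) lessThan_iff case_prod_conv)

lemma ip_herm: "herm n A \<Longrightarrow> ip n x (app n A y) = ip n (app n A x) y"
  unfolding ip_adj by (rule ip_cong) (auto simp: adj_herm)

lemma app_mult: assumes "A \<in> carrier_mat n n" "B \<in> carrier_mat n n" "i < n"
  shows "app n (A * B) x i = app n A (app n B x) i"
proof -
  have "app n (A * B) x i = (\<Sum>j<n. (\<Sum>k<n. A $$ (i,k) * B $$ (k,j)) * x j)"
    unfolding app_def using assms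
    by (intro sum.cong) (auto simp: scalar_prod_def atLeast0LessThan)
  also have "\<dots> = (\<Sum>j<n. \<Sum>k<n. A $$ (i,k) * (B $$ (k,j) * x j))"
    by (simp add: sum_distrib_right mult.assoc)
  also have "\<dots> = (\<Sum>k<n. \<Sum>j<n. A $$ (i,k) * (B $$ (k,j) * x j))"
    by (rule sum.swap)
  also have "\<dots> = app n A (app n B x) i"
    unfolding app_def by (simp add: sum_distrib_left)
  finally show ?thesis .
qed

lemma qf_real: "herm n A \<Longrightarrow> qf n A x = complex_of_real (Re (qf n A x))"
proof -
  assume h: "herm n A"
  have "cnj (qf n A x) = qf n A x"
    unfolding qf_def by (metis ip_conj ip_herm[OF h])
  then show ?thesis by (metis Reals_cnj_iff complex_is_Real_iff of_real_Re)
qed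

lemma qf_vec: "A \<in> carrier_mat n n \<Longrightarrow> v \<in> carrier_vec n \<Longrightarrow>
    conjugate v \<bullet> (A *\<^sub>v v) = qf n A (\<lambda>i. v $ i)"
  unfolding qf_def ip_def app_def scalar_prod_def mult_mat_vec_def
  by (auto simp: atLeast0LessThan intro!: sum.cong)

lemma mult_vec_app: "A \<in> carrier_mat n n \<Longrightarrow> v \<in> carrier_vec n \<Longrightarrow>
    A *\<^sub>v v = vec n (app n A (\<lambda>i. v $ i))"
  unfolding app_def scalar_prod_def mult_mat_vec_def
  by (auto simp: atLeast0LessThan intro!: sum.cong)

lemma psd_iff: "psd n A \<longleftrightarrow> A \<in> carrier_mat n n \<and> herm n A \<and> (\<forall>x. qf n A x \<ge> 0)"
proof
  assume p: "psd n A"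
  then have A: "A \<in> carrier_mat n n" and h: "herm n A" unfolding psd_def herm_def by blast+
  have "qf n A x \<ge> 0" for x
  proof -
    have "conjugate (vec n x) \<bullet> (A *\<^sub>v vec n x) \<ge> 0" using p unfolding psd_def by auto
    also have "conjugate (vec n x) \<bullet> (A *\<^sub>v vec n x) = qf n A x"
      proof -
      have e: "app n A (($) (vec n x)) = app n A x" by (rule app_cong) simp
      show ?thesis unfolding qf_vec[OF A vec_carrier] qf_def e
        by (intro ip_cong) auto
    qed
    finally show ?thesis .
  qed
  then show "A \<in> carrier_mat n n \<and> herm n A \<and> (\<forall>x. qf n A x \<ge> 0)" using A h by auto
next
  assume r: "A \<in> carrier_mat n n \<and> herm n A \<and> (\<forall>x. qf n A x \<ge> 0)"
  have h: "\<forall>i<n. \<forall>j<n. A $$ (i, j) = cnj (A $$ (j, i))" using r unfolding herm_def by blast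
  have "\<forall>v \<in> carrier_vec n. conjugate v \<bullet> (A *\<^sub>v v) \<ge> 0"
    using r qf_vec[of A n] by simp
  then show "psd n A" unfolding psd_def using r h by blast
qed

lemma qf_expand: "qf n A (\<lambda>i. u i + l * v i) =
   qf n A u + l * ip n u (app n A v) + cnj l * ip n v (app n A u) + cnj l * l * qf n A v"
  unfolding qf_def app_add app_smult ip_add_left ip_add_right ip_smult_left ip_smult_right
  by (simp add: algebra_simps)

lemma cnj_mult_self: "cnj b * b = complex_of_real ((cmod b)\<^sup>2)"
  by (metis complex_norm_square mult.commute)

lemma mult_cnj_self2: "b * cnj b = (complex_of_real (cmod b))\<^sup>2"
  by (metis complex_norm_square of_real_power)

lemma cnj_mult_self2: "cnj b * b = (complex_of_real (cmod b))\<^sup>2"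
  by (metis mult_cnj_self2 mult.commute)

lemma cs:
  assumes h: "herm n A" and pos: "\<forall>x. qf n A x \<ge> 0"
  shows "(cmod (ip n u (app n A v)))\<^sup>2 \<le> Re (qf n A u) * Re (qf n A v)"
proof -
  define b where "b = ip n u (app n A v)"
  define a where "a = Re (qf n A u)"
  define c where "c = Re (qf n A v)"
  define B where "B = (cmod b)\<^sup>2"
  have c0: "c \<ge> 0" and a0: "a \<ge> 0" using pos unfolding a_def c_def less_eq_complex_def by auto
  have B0: "B \<ge> 0" unfolding B_def by simp
  have vu: "ip n v (app n A u) = cnj b" unfolding b_def
    by (metis ip_conj ip_herm[OF h])
  have key: "0 \<le> a - 2 * s * B + s\<^sup>2 * B * c" for s :: real
  proof -
    define l where "l = - (complex_of_real s * cnj b)"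
    have "0 \<le> Re (qf n A (\<lambda>i. u i + l * v i))" using pos unfolding less_eq_complex_def by auto
    also have "qf n A (\<lambda>i. u i + l * v i) = qf n A u + l * b + cnj l * cnj b + cnj l * l * qf n A v"
      unfolding qf_expand vu b_def ..
    also have "l * b = - complex_of_real (s * B)"
      unfolding l_def B_def by (simp add: cnj_mult_self[symmetric] mult_cnj_self2 cnj_mult_self2 algebra_simps)
    also have "cnj l * cnj b = - complex_of_real (s * B)"
      unfolding l_def B_def by (simp add: cnj_mult_self[symmetric] mult_cnj_self2 cnj_mult_self2 algebra_simps)
    also have "cnj l * l = complex_of_real (s\<^sup>2 * B)"
    proof -
      have "cnj l * l = (complex_of_real s)\<^sup>2 * (b * cnj b)"
        unfolding l_def by (simp add: power2_eq_square algebra_simps)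
      also have "\<dots> = complex_of_real (s\<^sup>2 * B)" unfolding mult_cnj_self2 B_def by simp
      finally show ?thesis .
    qed
    finally show ?thesis unfolding a_def c_def by (simp add: algebra_simps)
  qed
  have "B \<le> a * c"
  proof (cases "c > 0")
    case True
    have "0 \<le> a - 2 * (1/c) * B + (1/c)\<^sup>2 * B * c" by (rule key)
    also have "\<dots> = a - B / c" using True by (simp add: field_simps power2_eq_square)
    finally show ?thesis using True by (simp add: field_simps)
  next
    case False
    then have c: "c = 0" using c0 by simp
    show ?thesis
    proof (rule ccontr)
      assume "\<not> B \<le> a * c"
      then have "B > 0" using c by simp
      have "0 \<le> a - 2 * ((a + 1) / (2 * B)) * B + ((a + 1) / (2 * B))\<^sup>2 * B * c" by (rule key)
      also have "\<dots> = -1" using \<open>B > 0\<close> c by (simp add: field_simps)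
      finally show False by simp
    qed
  qed
  then show ?thesis unfolding B_def b_def a_def c_def .
qed

lemma psd_kernel:
  assumes h: "herm n A" and pos: "\<forall>x. qf n A x \<ge> 0" and z: "Re (qf n A x) = 0" and i: "i < n"
  shows "app n A x i = 0"
proof -
  have "(cmod (ip n (app n A x) (app n A x)))\<^sup>2 \<le> Re (qf n A (app n A x)) * Re (qf n A x)"
    by (rule cs[OF h pos])
  then have "cmod (ip n (app n A x) (app n A x)) = 0" using z by simp
  then have "Re (ip n (app n A x) (app n A x)) = 0" by simp
  then show ?thesis using ip_self_zero i by blast
qed

lemma crude:
  "cmod (qf n A x) \<le> (\<Sum>i<n. \<Sum>j<n. cmod (A $$ (i, j))) * Re (ip n x x)"
proof -
  define S where "S = (\<Sum>k<n. (cmod (x k))\<^sup>2)"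
  have S: "Re (ip n x x) = S" unfolding S_def ip_self_real by simp
  have xi: "(cmod (x i))\<^sup>2 \<le> S" if "i < n" for i
    unfolding S_def using that by (intro member_le_sum) auto
  have xij: "cmod (x i) * cmod (x j) \<le> S" if "i < n" "j < n" for i j
  proof -
    have "cmod (x i) * cmod (x j) \<le> ((cmod (x i))\<^sup>2 + (cmod (x j))\<^sup>2) / 2"
      using sum_squares_bound[of "cmod (x i)" "cmod (x j)"] by simp
    also have "\<dots> \<le> S" using xi[OF that(1)] xi[OF that(2)] by simp
    finally show ?thesis .
  qed
  have "qf n A x = (\<Sum>i<n. \<Sum>j<n. cnj (x i) * (A $$ (i, j) * x j))"
    unfolding qf_def ip_def app_def by (simp add: sum_distrib_left)
  then have "cmod (qf n A x) \<le> (\<Sum>i<n. cmod (\<Sum>j<n. cnj (x i) * (A $$ (i, j) * x j)))"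
    by (simp add: norm_sum)
  also have "\<dots> \<le> (\<Sum>i<n. \<Sum>j<n. cmod (cnj (x i) * (A $$ (i, j) * x j)))"
    by (intro sum_mono norm_sum)
  also have "\<dots> \<le> (\<Sum>i<n. \<Sum>j<n. cmod (A $$ (i, j)) * S)"
  proof (intro sum_mono)
    fix i j assume "i \<in> {..<n}" "j \<in> {..<n}"
    then have "cmod (x i) * cmod (x j) \<le> S" using xij by auto
    then have "cmod (A $$ (i, j)) * (cmod (x i) * cmod (x j)) \<le> cmod (A $$ (i, j)) * S"
      by (intro mult_left_mono) auto
    then show "cmod (cnj (x i) * (A $$ (i, j) * x j)) \<le> cmod (A $$ (i, j)) * S"
      by (simp add: norm_mult algebra_simps)
  qed
  also have "\<dots> = (\<Sum>i<n. \<Sum>j<n. cmod (A $$ (i, j))) * Re (ip n x x)"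
    unfolding S by (simp add: sum_distrib_right)
  finally show ?thesis .
qed

lemma ginv_mat:
  fixes A :: "complex mat"
  assumes A: "A \<in> carrier_mat n n"
  shows "\<exists>G \<in> carrier_mat n n. A * G * A = A"
proof -
  obtain R B' where res: "gauss_jordan A (0\<^sub>m n 0) = (R, B')"
    by (cases "gauss_jordan A (0\<^sub>m n 0)") auto
  have Z: "(0\<^sub>m n 0 :: complex mat) \<in> carrier_mat n 0" by simp
  from gauss_jordan_transform[OF A Z res, of undefined] obtain P where
    P: "P \<in> Units (ring_mat TYPE(complex) n undefined)" and RP: "R = P * A" by auto
  from P obtain Q where Pc: "P \<in> carrier_mat n n" and Qc: "Q \<in> carrier_mat n n" and QP: "Q * P = 1\<^sub>m n"
    unfolding Units_def ring_mat_def by auto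
  have Rc: "R \<in> carrier_mat n n" using gauss_jordan_carrier[OF A Z res] by auto
  from gauss_jordan_row_echelon[OF A res] obtain f where pf: "pivot_fun R f n"
    unfolding row_echelon_form_def using Rc by auto
  have dR: "dim_row R = n" using Rc by auto
  note pD = pivot_funD[OF dR pf]
  define H where "H = mat n n (\<lambda>(j, i). if f i < n \<and> j = f i then 1 else 0 :: complex)"
  have Hc: "H \<in> carrier_mat n n" unfolding H_def by simp
  have RH: "(R * H) $$ (k, i) = (if f i < n \<and> k = i then 1 else 0)" if k: "k < n" and i: "i < n" for k i
  proof -
    have "(R * H) $$ (k, i) = (\<Sum>j<n. R $$ (k, j) * H $$ (j, i))"
      using Rc Hc k i by (simp add: scalar_prod_def atLeast0LessThan)
    also have "\<dots> = (\<Sum>j<n. if j = f i then (if f i < n then R $$ (k, j) else 0) else 0)"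
      by (intro sum.cong refl) (use i in \<open>auto simp: H_def\<close>)
    also have "\<dots> = (if f i < n then R $$ (k, f i) else 0)"
      by (simp add: sum.delta')
    also have "\<dots> = (if f i < n \<and> k = i then 1 else 0)"
      using pD(4)[OF i] pD(5)[OF i _ k] by auto
    finally show ?thesis .
  qed
  have RHR: "R * H * R = R"
  proof (rule eq_matI)
    fix k l assume k: "k < dim_row R" and l: "l < dim_col R"
    then have k': "k < n" and l': "l < n" using Rc by auto
    have "(R * H * R) $$ (k, l) = row (R * H) k \<bullet> col R l"
      by (rule index_mult_mat) (use Rc Hc k' l' in auto)
    also have "\<dots> = (\<Sum>i<n. (R * H) $$ (k, i) * R $$ (i, l))"
      unfolding scalar_prod_def using Rc Hc k' l' by (auto simp: atLeast0LessThan intro!: sum.cong)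
    also have "\<dots> = (\<Sum>i<n. if i = k then (if f k < n then R $$ (i, l) else 0) else 0)"
      by (intro sum.cong refl) (use k' in \<open>auto simp: RH\<close>)
    also have "\<dots> = (if f k < n then R $$ (k, l) else 0)"
      using k' by (simp add: sum.delta')
    also have "\<dots> = R $$ (k, l)"
      using pD(1)[OF k'] pD(2)[OF k', of l] l' by (cases "f k < n") auto
    finally show "(R * H * R) $$ (k, l) = R $$ (k, l)" .
  qed (use Rc Hc in auto)
  have AQR: "A = Q * R"
  proof -
    have "Q * R = (Q * P) * A" unfolding RP using Qc Pc A by (simp add: assoc_mult_mat)
    then show ?thesis using QP A by simp
  qed
  have "A * (H * P) * A = Q * (R * H * R)"
  proof -
    have "A * (H * P) * A = Q * R * (H * P) * A" using AQR by simp
    also have "\<dots> = Q * (R * H * (P * A))"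
      using Qc Rc Hc Pc A by (simp add: assoc_mult_mat[of _ n n _ n _ n])
    also have "\<dots> = Q * (R * H * R)" unfolding RP ..
    finally show ?thesis .
  qed
  also have "\<dots> = A" using RHR AQR by simp
  finally show ?thesis using Hc Pc by (intro bexI[of _ "H * P"]) auto
qed

lemma ginv:
  fixes A :: "complex mat"
  assumes A: "A \<in> carrier_mat n n"
  shows "\<exists>G \<in> carrier_mat n n. \<forall>x i. i < n \<longrightarrow> app n A (app n G (app n A x)) i = app n A x i"
proof -
  obtain G where G: "G \<in> carrier_mat n n" and AGA: "A * G * A = A" using ginv_mat[OF A] by blast
  have "app n A (app n G (app n A x)) i = app n A x i" if i: "i < n" for x i
  proof -
    have "app n A x i = app n (A * G * A) x i" using AGA by simp
    also have "\<dots> = app n (A * G) (app n A x) i" using A G i by (intro app_mult) auto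
    also have "\<dots> = app n A (app n G (app n A x)) i" using A G i by (intro app_mult) auto
    finally show ?thesis by simp
  qed
  then show ?thesis using G by blast
qed

lemma ip_adj2: "ip n (app n A y) x = ip n y (app n (adj n A) x)"
proof -
  have "ip n (app n A y) x = cnj (ip n x (app n A y))" by (rule ip_conj)
  also have "\<dots> = cnj (ip n (app n (adj n A) x) y)" by (simp only: ip_adj)
  also have "\<dots> = ip n y (app n (adj n A) x)" by (simp only: ip_conj[of n y] complex_cnj_cnj)
  finally show ?thesis .
qed

lemma qf_real_psd: "\<forall>x. qf n A x \<ge> 0 \<Longrightarrow> qf n A x = complex_of_real (Re (qf n A x))"
proof -
  assume "\<forall>x. qf n A x \<ge> 0"
  then have "Im (qf n A x) = 0" unfolding less_eq_complex_def by auto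
  then show ?thesis by (simp add: complex_eq_iff)
qed

lemma ip_zero_right: "(\<And>i. i < n \<Longrightarrow> y i = 0) \<Longrightarrow> ip n x y = 0"
  unfolding ip_def by (intro sum.neutral) auto

lemma ip_self_eq0: "ip n e e = 0 \<Longrightarrow> i < n \<Longrightarrow> e i = 0"
  using ip_self_zero[of n e i] by simp

lemma K_nonneg: "0 \<le> (\<Sum>i<n. \<Sum>j<n. cmod (A $$ (i, j)))"
  by (intro sum_nonneg) auto

lemma loewner_exists_app:
  assumes r: "psd n \<rho>" and w: "psd n \<omega>"
    and rng: "\<forall>x. \<exists>y. \<forall>i<n. app n \<rho> x i = app n \<omega> y i"
  shows "\<exists>t\<ge>0. \<forall>x. Re (qf n \<rho> x) \<le> t * Re (qf n \<omega> x)"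
proof -
  have rc: "\<rho> \<in> carrier_mat n n" and rh: "herm n \<rho>" and rp: "\<forall>x. qf n \<rho> x \<ge> 0"
    using r unfolding psd_iff by auto
  have wc: "\<omega> \<in> carrier_mat n n" and wh: "herm n \<omega>" and wp: "\<forall>x. qf n \<omega> x \<ge> 0"
    using w unfolding psd_iff by auto
  obtain G where Gc: "G \<in> carrier_mat n n"
    and gi: "\<And>x i. i < n \<Longrightarrow> app n \<omega> (app n G (app n \<omega> x)) i = app n \<omega> x i"
    using ginv[OF wc] by blast
  have sa: "app n \<rho> x i = app n \<omega> (app n G (app n \<rho> x)) i" if i: "i < n" for x i
  proof -
    obtain y where y: "\<forall>i<n. app n \<rho> x i = app n \<omega> y i" using rng by blast
    have "app n G (app n \<rho> x) = app n G (app n \<omega> y)" by (rule app_cong) (use y in auto)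
    then have "app n \<omega> (app n G (app n \<rho> x)) i = app n \<omega> y i" using gi[OF i] by simp
    then show ?thesis using y i by simp
  qed
  define z where "z = (\<lambda>u. app n (adj n G) (app n \<omega> u))"
  have compress: "ip n u (app n \<rho> v) = ip n (z u) (app n \<rho> v)" for u v
  proof -
    have "ip n u (app n \<rho> v) = ip n u (app n \<omega> (app n G (app n \<rho> v)))"
      by (rule ip_cong) (simp, erule sa)
    also have "\<dots> = ip n (app n \<omega> u) (app n G (app n \<rho> v))" by (rule ip_herm[OF wh])
    also have "\<dots> = ip n (z u) (app n \<rho> v)" unfolding z_def by (rule ip_adj)
    finally show ?thesis .
  qed
  have qz: "qf n \<rho> x = qf n \<rho> (z x)" for x
  proof -
    have "qf n \<rho> x = ip n (z x) (app n \<rho> x)" unfolding qf_def by (rule compress)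
    also have "\<dots> = ip n (app n \<rho> (z x)) x" by (rule ip_herm[OF rh])
    also have "\<dots> = cnj (ip n x (app n \<rho> (z x)))" by (rule ip_conj)
    also have "\<dots> = cnj (qf n \<rho> (z x))" by (simp only: qf_def compress[of x "z x"])
    also have "\<dots> = qf n \<rho> (z x)" using qf_real_psd[OF rp, of "z x"] by (metis complex_cnj_complex_of_real)
    finally show ?thesis .
  qed
  define K1 where "K1 = (\<Sum>i<n. \<Sum>j<n. cmod (\<rho> $$ (i, j)))"
  define K2 where "K2 = (\<Sum>i<n. \<Sum>j<n. cmod ((adj n (adj n G) * adj n G) $$ (i, j)))"
  define K3 where "K3 = (\<Sum>i<n. \<Sum>j<n. cmod (\<omega> $$ (i, j)))"
  have K1: "K1 \<ge> 0" and K2: "K2 \<ge> 0" and K3: "K3 \<ge> 0" unfolding K1_def K2_def K3_def by (rule K_nonneg)+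
  have adjc: "adj n G \<in> carrier_mat n n" unfolding adj_def by simp
  have bound: "Re (qf n \<rho> x) \<le> K1 * K2 * K3 * Re (qf n \<omega> x)" for x
  proof -
    define w where "w = app n \<omega> x"
    have "Re (qf n \<rho> x) = Re (qf n \<rho> (z x))" by (rule arg_cong[OF qz])
    also have "\<dots> \<le> cmod (qf n \<rho> (z x))" by (rule complex_Re_le_cmod)
    also have "\<dots> \<le> K1 * Re (ip n (z x) (z x))" unfolding K1_def by (rule crude)
    also have "Re (ip n (z x) (z x)) \<le> K2 * Re (ip n w w)"
    proof -
      have "ip n (z x) (z x) = ip n w (app n (adj n (adj n G)) (z x))" unfolding z_def w_def
        by (rule ip_adj2)
      also have "\<dots> = qf n (adj n (adj n G) * adj n G) w" unfolding qf_def z_def w_def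
        by (rule ip_cong) (use adjc in \<open>auto simp: app_mult adj_def\<close>)
      finally have "Re (ip n (z x) (z x)) \<le> cmod (qf n (adj n (adj n G) * adj n G) w)"
        using complex_Re_le_cmod by metis
      also have "\<dots> \<le> K2 * Re (ip n w w)" unfolding K2_def by (rule crude)
      finally show ?thesis .
    qed
    then have "K1 * Re (ip n (z x) (z x)) \<le> K1 * (K2 * Re (ip n w w))"
      using K1 by (rule mult_left_mono)
    also have "Re (ip n w w) \<le> K3 * Re (qf n \<omega> x)"
    proof -
      define s where "s = Re (ip n w w)"
      have s0: "s \<ge> 0" unfolding s_def by (rule ip_self_ge0)
      have ipw: "ip n w (app n \<omega> x) = complex_of_real s"
        unfolding s_def w_def by (simp add: ip_self_real)
      have "s\<^sup>2 \<le> Re (qf n \<omega> w) * Re (qf n \<omega> x)"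
        using cs[OF wh wp, of w x] unfolding ipw by simp
      also have "\<dots> \<le> (K3 * s) * Re (qf n \<omega> x)"
      proof (rule mult_right_mono)
        show "Re (qf n \<omega> w) \<le> K3 * s"
          using crude[of n \<omega> w] complex_Re_le_cmod[of "qf n \<omega> w"] unfolding K3_def s_def by linarith
        show "0 \<le> Re (qf n \<omega> x)" using wp unfolding less_eq_complex_def by auto
      qed
      finally have "s * s \<le> s * (K3 * Re (qf n \<omega> x))" by (simp add: power2_eq_square algebra_simps)
      have q0: "0 \<le> Re (qf n \<omega> x)" using wp unfolding less_eq_complex_def by auto
      show ?thesis
      proof (cases "s = 0")
        case True
        then show ?thesis unfolding s_def[symmetric] using K3 q0 by simp
      next
        case False
        then have "s > 0" using s0 by simp
        have "s \<le> K3 * Re (qf n \<omega> x)"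
          by (rule mult_left_le_imp_le[OF \<open>s * s \<le> s * (K3 * Re (qf n \<omega> x))\<close> \<open>s > 0\<close>])
        then show ?thesis unfolding s_def .
      qed
    qed
    then have "K1 * (K2 * Re (ip n w w)) \<le> K1 * (K2 * (K3 * Re (qf n \<omega> x)))"
      using K1 K2 by (intro mult_left_mono) auto
    finally show ?thesis by (simp add: algebra_simps)
  qed
  show ?thesis using bound K1 K2 K3 by (intro exI[of _ "K1 * K2 * K3"]) auto
qed

lemma range_incl_app:
  assumes a: "psd n A" and b: "psd n B"
    and le: "\<forall>x. Re (qf n A x) \<le> c * Re (qf n B x)"
  shows "\<forall>x. \<exists>y. \<forall>i<n. app n A x i = app n B y i"
proof -
  have ac: "A \<in> carrier_mat n n" and ah: "herm n A" and ap: "\<forall>x. qf n A x \<ge> 0"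
    using a unfolding psd_iff by auto
  have bc: "B \<in> carrier_mat n n" and bh: "herm n B" and bp: "\<forall>x. qf n B x \<ge> 0"
    using b unfolding psd_iff by auto
  obtain G where Gc: "G \<in> carrier_mat n n"
    and gi: "\<And>x i. i < n \<Longrightarrow> app n B (app n G (app n B x)) i = app n B x i"
    using ginv[OF bc] by blast
  have ker: "app n A y i = app n A (app n G (app n B y)) i" if i: "i < n" for y i
  proof -
    define d where "d = (\<lambda>i. y i - app n G (app n B y) i)"
    have Bd: "app n B d j = 0" if "j < n" for j
      unfolding d_def app_diff using gi[OF that] by simp
    have "qf n B d = 0" unfolding qf_def by (rule ip_zero_right) (rule Bd)
    then have "Re (qf n A d) \<le> 0" using le[rule_format, of d] by simp
    moreover have "Re (qf n A d) \<ge> 0" using ap unfolding less_eq_complex_def by auto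
    ultimately have "Re (qf n A d) = 0" by simp
    from psd_kernel[OF ah ap this i] have "app n A d i = 0" .
    then show ?thesis unfolding d_def app_diff by simp
  qed
  show ?thesis
  proof
    fix x
    define y where "y = app n (adj n G) (app n A x)"
    define e where "e = (\<lambda>i. app n A x i - app n B y i)"
    have "ip n e v = 0" for v
    proof -
      have "ip n (app n A x) v = ip n x (app n A v)" by (rule ip_herm[OF ah, symmetric])
      also have "\<dots> = ip n x (app n A (app n G (app n B v)))"
        by (rule ip_cong) (simp, erule ker)
      also have "\<dots> = ip n (app n A x) (app n G (app n B v))" by (rule ip_herm[OF ah])
      also have "\<dots> = ip n y (app n B v)" unfolding y_def by (rule ip_adj)
      also have "\<dots> = ip n (app n B y) v" by (rule ip_herm[OF bh])
      finally show ?thesis unfolding e_def ip_diff_left by simp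
    qed
    then have "ip n e e = 0" by simp
    then have "\<forall>i<n. e i = 0" using ip_self_eq0 by blast
    then show "\<exists>y. \<forall>i<n. app n A x i = app n B y i" unfolding e_def by (intro exI[of _ y]) auto
  qed
qed

lemma supp_iff:
  assumes A: "A \<in> carrier_mat n n" and B: "B \<in> carrier_mat n n"
  shows "supp n A \<subseteq> supp n B \<longleftrightarrow> (\<forall>x. \<exists>y. \<forall>i<n. app n A x i = app n B y i)"
proof
  assume s: "supp n A \<subseteq> supp n B"
  show "\<forall>x. \<exists>y. \<forall>i<n. app n A x i = app n B y i"
  proof
    fix x
    have "A *\<^sub>v vec n x \<in> supp n A" unfolding supp_def by auto
    with s obtain w where w: "w \<in> carrier_vec n" and eq: "A *\<^sub>v vec n x = B *\<^sub>v w"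
      unfolding supp_def by auto
    have e1: "app n A (($) (vec n x)) = app n A x" by (rule app_cong) simp
    have "vec n (app n A x) = vec n (app n B (($) w))"
      using eq unfolding mult_vec_app[OF A vec_carrier] mult_vec_app[OF B w] e1 .
    then have "\<forall>i<n. app n A x i = app n B (($) w) i"
      by (metis index_vec)
    then show "\<exists>y. \<forall>i<n. app n A x i = app n B y i" by blast
  qed
next
  assume r: "\<forall>x. \<exists>y. \<forall>i<n. app n A x i = app n B y i"
  show "supp n A \<subseteq> supp n B"
  proof
    fix u assume "u \<in> supp n A"
    then obtain v where v: "v \<in> carrier_vec n" and u: "u = A *\<^sub>v v" unfolding supp_def by auto
    obtain y where y: "\<forall>i<n. app n A (($) v) i = app n B y i" using r by blast
    have e1: "app n B (($) (vec n y)) = app n B y" by (rule app_cong) simp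
    have "u = B *\<^sub>v vec n y"
      unfolding u mult_vec_app[OF A v] mult_vec_app[OF B vec_carrier] e1
      using y by auto
    then show "u \<in> supp n B" unfolding supp_def by auto
  qed
qed

lemma loewner_iff:
  assumes a: "psd n A" and b: "psd n B"
  shows "loewner_le n A (complex_of_real t \<cdot>\<^sub>m B) \<longleftrightarrow> (\<forall>x. Re (qf n A x) \<le> t * Re (qf n B x))"
proof -
  have ac: "A \<in> carrier_mat n n" and ah: "herm n A" and ap: "\<forall>x. qf n A x \<ge> 0"
    using a unfolding psd_iff by auto
  have bc: "B \<in> carrier_mat n n" and bh: "herm n B" and bp: "\<forall>x. qf n B x \<ge> 0"
    using b unfolding psd_iff by auto
  define C where "C = complex_of_real t \<cdot>\<^sub>m B - A"
  have cc: "C \<in> carrier_mat n n" unfolding C_def using ac bc by auto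
  have Cij: "C $$ (i, j) = complex_of_real t * B $$ (i, j) - A $$ (i, j)" if "i < n" "j < n" for i j
    unfolding C_def using ac bc that by simp
  have ch: "herm n C" unfolding herm_def
  proof (intro allI impI)
    fix i j assume "i < n" "j < n"
    note ij = this
    have hA: "A $$ (i, j) = cnj (A $$ (j, i))" using ah ij unfolding herm_def by blast
    have hB: "B $$ (i, j) = cnj (B $$ (j, i))" using bh ij unfolding herm_def by blast
    show "C $$ (i, j) = cnj (C $$ (j, i))"
      using ij by (simp add: Cij hA hB)
  qed
  have qC: "qf n C x = complex_of_real t * qf n B x - qf n A x" for x
  proof -
    have "app n C x i = complex_of_real t * app n B x i - app n A x i" if "i < n" for i
      unfolding app_def using that
      by (simp add: Cij sum_subtractf sum_distrib_left algebra_simps)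
    then have "qf n C x = ip n x (\<lambda>i. complex_of_real t * app n B x i - app n A x i)"
      unfolding qf_def by (intro ip_cong) auto
    then show ?thesis unfolding ip_diff_right ip_smult_right qf_def .
  qed
  have imA: "Im (qf n A x) = 0" and imB: "Im (qf n B x) = 0" for x
    using ap bp unfolding less_eq_complex_def by auto
  have "loewner_le n A (complex_of_real t \<cdot>\<^sub>m B) \<longleftrightarrow> (\<forall>x. qf n C x \<ge> 0)"
    unfolding loewner_le_def C_def[symmetric] psd_iff using cc ch by auto
  also have "\<dots> \<longleftrightarrow> (\<forall>x. Re (qf n A x) \<le> t * Re (qf n B x))"
    unfolding qC less_eq_complex_def using imA imB by auto
  finally show ?thesis .
qed

lemma qf_unit:
  assumes i: "i < n"
  shows "qf n A (\<lambda>j. if j = i then 1 else 0) = A $$ (i, i)"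
proof -
  have "app n A (\<lambda>j. if j = i then 1 else 0) = (\<lambda>k. A $$ (k, i))"
    unfolding app_def using i by (simp add: if_distrib[of "\<lambda>x. _ * x"] sum.delta' cong: if_cong)
  moreover have "(\<Sum>k<n. cnj (if k = i then 1 else 0) * A $$ (k, i)) = (\<Sum>k<n. if k = i then A $$ (k, i) else 0)"
    by (intro sum.cong) auto
  ultimately show ?thesis unfolding qf_def ip_def using i by (simp add: sum.delta')
qed

lemma trace_qf:
  assumes "A \<in> carrier_mat n n"
  shows "mtrace A = (\<Sum>i<n. qf n A (\<lambda>j. if j = i then 1 else 0))"
  unfolding mtrace_def using assms by (auto simp: qf_unit intro!: sum.cong)

lemma least_props:
  assumes r: "psd n \<rho>" and w: "psd n \<omega>" and tr: "mtrace \<rho> = 1" "mtrace \<omega> = 1"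
    and ex: "\<exists>t. loewner_le n \<rho> (complex_of_real t \<cdot>\<^sub>m \<omega>)"
  shows "loewner_le n \<rho> (complex_of_real (LEAST t. loewner_le n \<rho> (complex_of_real t \<cdot>\<^sub>m \<omega>)) \<cdot>\<^sub>m \<omega>)"
    and "1 \<le> (LEAST t. loewner_le n \<rho> (complex_of_real t \<cdot>\<^sub>m \<omega>))"
    and "\<And>t. loewner_le n \<rho> (complex_of_real t \<cdot>\<^sub>m \<omega>) \<Longrightarrow> (LEAST t. loewner_le n \<rho> (complex_of_real t \<cdot>\<^sub>m \<omega>)) \<le> t"
proof -
  have rc: "\<rho> \<in> carrier_mat n n" and rp: "\<forall>x. qf n \<rho> x \<ge> 0" using r unfolding psd_iff by auto
  have wc: "\<omega> \<in> carrier_mat n n" and wp: "\<forall>x. qf n \<omega> x \<ge> 0" using w unfolding psd_iff by auto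
  define S where "S = {t. \<forall>x. Re (qf n \<rho> x) \<le> t * Re (qf n \<omega> x)}"
  have LS: "loewner_le n \<rho> (complex_of_real t \<cdot>\<^sub>m \<omega>) \<longleftrightarrow> t \<in> S" for t
    unfolding S_def using loewner_iff[OF r w] by simp
  have ge1: "1 \<le> t" if t: "t \<in> S" for t
  proof -
    define e where "e = (\<lambda>(i::nat) (j::nat). if j = i then (1::complex) else 0)"
    have "Re (mtrace \<rho>) = (\<Sum>i<n. Re (qf n \<rho> (e i)))"
      using trace_qf[OF rc] unfolding e_def by simp
    also have "\<dots> \<le> (\<Sum>i<n. t * Re (qf n \<omega> (e i)))"
      by (intro sum_mono) (use t in \<open>auto simp: S_def\<close>)
    also have "\<dots> = t * Re (mtrace \<omega>)"
      using trace_qf[OF wc] unfolding e_def by (simp add: sum_distrib_left)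
    finally show ?thesis using tr by simp
  qed
  obtain t1 where t1: "t1 \<in> S" using ex LS by blast
  have bdd: "bdd_below S" using ge1 by (intro bdd_belowI[of _ 1]) auto
  define t0 where "t0 = Inf S"
  have t0S: "t0 \<in> S"
    unfolding S_def
  proof (intro CollectI allI)
    fix x
    have a0: "Re (qf n \<omega> x) \<ge> 0" using wp unfolding less_eq_complex_def by auto
    show "Re (qf n \<rho> x) \<le> t0 * Re (qf n \<omega> x)"
    proof (cases "Re (qf n \<omega> x) = 0")
      case True
      have "Re (qf n \<rho> x) \<le> t1 * Re (qf n \<omega> x)" using t1 unfolding S_def by blast
      then show ?thesis using True by simp
    next
      case False
      then have apos: "Re (qf n \<omega> x) > 0" using a0 by simp
      have "Re (qf n \<rho> x) / Re (qf n \<omega> x) \<le> t0"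
        unfolding t0_def
      proof (rule cInf_greatest)
        show "S \<noteq> {}" using t1 by auto
        fix t assume "t \<in> S"
        then have "Re (qf n \<rho> x) \<le> t * Re (qf n \<omega> x)" unfolding S_def by auto
        then show "Re (qf n \<rho> x) / Re (qf n \<omega> x) \<le> t" using apos by (simp add: divide_le_eq)
      qed
      then show ?thesis using apos by (simp add: divide_le_eq mult.commute)
    qed
  qed
  have t0le: "t0 \<le> t" if "t \<in> S" for t
    unfolding t0_def by (rule cInf_lower[OF that bdd])
  have L: "(LEAST t. loewner_le n \<rho> (complex_of_real t \<cdot>\<^sub>m \<omega>)) = t0"
    by (rule Least_equality) (use t0S t0le LS in auto)
  show "loewner_le n \<rho> (complex_of_real (LEAST t. loewner_le n \<rho> (complex_of_real t \<cdot>\<^sub>m \<omega>)) \<cdot>\<^sub>m \<omega>)"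
    unfolding L using t0S LS by blast
  show "1 \<le> (LEAST t. loewner_le n \<rho> (complex_of_real t \<cdot>\<^sub>m \<omega>))"
    unfolding L by (rule ge1[OF t0S])
  show "(LEAST t. loewner_le n \<rho> (complex_of_real t \<cdot>\<^sub>m \<omega>)) \<le> t"
    if "loewner_le n \<rho> (complex_of_real t \<cdot>\<^sub>m \<omega>)" for t
    unfolding L using that LS t0le by auto
qed

lemma dmax_cases:
  assumes r: "psd n \<rho>" and w: "psd n \<omega>" and tr: "mtrace \<rho> = 1" "mtrace \<omega> = 1"
  shows "Dmax_st n \<rho> \<omega> = \<infinity> \<or> (\<exists>L\<ge>1. Dmax_st n \<rho> \<omega> = ereal (log 2 L) \<and>
           loewner_le n \<rho> (complex_of_real L \<cdot>\<^sub>m \<omega>))"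
proof (cases "supp n \<rho> \<subseteq> supp n \<omega>")
  case True
  have rc: "\<rho> \<in> carrier_mat n n" using r unfolding psd_def by auto
  have wc: "\<omega> \<in> carrier_mat n n" using w unfolding psd_def by auto
  from True have "\<forall>x. \<exists>y. \<forall>i<n. app n \<rho> x i = app n \<omega> y i" using supp_iff[OF rc wc] by simp
  from loewner_exists_app[OF r w this] obtain t where "\<forall>x. Re (qf n \<rho> x) \<le> t * Re (qf n \<omega> x)" by blast
  then have ex: "\<exists>t. loewner_le n \<rho> (complex_of_real t \<cdot>\<^sub>m \<omega>)" using loewner_iff[OF r w] by blast
  note lp = least_props[OF r w tr ex]
  show ?thesis using True lp(1,2) unfolding Dmax_st_def by auto
next
  case False
  then show ?thesis unfolding Dmax_st_def by simp
qed

lemma dmax_upper: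
  assumes r: "psd n \<rho>" and w: "psd n \<omega>" and tr: "mtrace \<rho> = 1" "mtrace \<omega> = 1"
    and le: "loewner_le n \<rho> (complex_of_real t \<cdot>\<^sub>m \<omega>)"
  shows "Dmax_st n \<rho> \<omega> \<le> ereal (log 2 t)"
proof -
  have rc: "\<rho> \<in> carrier_mat n n" using r unfolding psd_def by auto
  have wc: "\<omega> \<in> carrier_mat n n" using w unfolding psd_def by auto
  have "\<forall>x. Re (qf n \<rho> x) \<le> t * Re (qf n \<omega> x)" using le loewner_iff[OF r w] by blast
  from range_incl_app[OF r w this] have s: "supp n \<rho> \<subseteq> supp n \<omega>" using supp_iff[OF rc wc] by simp
  have ex: "\<exists>t. loewner_le n \<rho> (complex_of_real t \<cdot>\<^sub>m \<omega>)" using le by blast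
  note lp = least_props[OF r w tr ex]
  have L1: "1 \<le> (LEAST t. loewner_le n \<rho> (complex_of_real t \<cdot>\<^sub>m \<omega>))" by (rule lp(2))
  have Lt: "(LEAST t. loewner_le n \<rho> (complex_of_real t \<cdot>\<^sub>m \<omega>)) \<le> t" by (rule lp(3)[OF le])
  have "log 2 (LEAST t. loewner_le n \<rho> (complex_of_real t \<cdot>\<^sub>m \<omega>)) \<le> log 2 t"
    using L1 Lt by (subst log_le_cancel_iff) auto
  then show ?thesis using s unfolding Dmax_st_def by simp
qed

lemma ch_carrier: "is_channel dA dB M \<Longrightarrow> X \<in> carrier_mat dA dA \<Longrightarrow> M X \<in> carrier_mat dB dB"
  unfolding is_channel_def by blast

lemma tensor_id_1:
  assumes X: "X \<in> carrier_mat dA dA" and MX: "M X \<in> carrier_mat dB dB"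
  shows "tensor_id 1 dA dB M X = M X"
proof -
  have b: "block dA X 0 0 = X" unfolding block_def using X by (intro eq_matI) auto
  show ?thesis unfolding tensor_id_def using MX b by (intro eq_matI) auto
qed

lemma ch_psd: "is_channel dA dB M \<Longrightarrow> psd dA X \<Longrightarrow> psd dB (M X)"
proof -
  assume c: "is_channel dA dB M" and p: "psd dA X"
  have X: "X \<in> carrier_mat dA dA" using p unfolding psd_def by auto
  have "psd (1 * dA) X \<longrightarrow> psd (1 * dB) (tensor_id 1 dA dB M X)" using c unfolding is_channel_def by blast
  then have "psd dB (tensor_id 1 dA dB M X)" using p by simp
  then show ?thesis using tensor_id_1[of X dA M dB, OF X ch_carrier[OF c X]] by simp
qed

lemma ch_lin:
  assumes c: "is_channel dA dB M" and X: "X \<in> carrier_mat dA dA" and Y: "Y \<in> carrier_mat dA dA"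
  shows "M (a \<cdot>\<^sub>m X - Y) = a \<cdot>\<^sub>m M X - M Y"
proof -
  have add: "\<forall>X \<in> carrier_mat dA dA. \<forall>Y \<in> carrier_mat dA dA. M (X + Y) = M X + M Y"
    and sm: "\<forall>X \<in> carrier_mat dA dA. \<forall>c::complex. M (c \<cdot>\<^sub>m X) = c \<cdot>\<^sub>m M X"
    using c unfolding is_channel_def by blast+
  have MX: "M X \<in> carrier_mat dB dB" and MY: "M Y \<in> carrier_mat dB dB" using ch_carrier[OF c] X Y by auto
  have e: "a \<cdot>\<^sub>m X - Y = a \<cdot>\<^sub>m X + (-1) \<cdot>\<^sub>m Y" using X Y by (intro eq_matI) auto
  have "M (a \<cdot>\<^sub>m X - Y) = M (a \<cdot>\<^sub>m X) + M ((-1) \<cdot>\<^sub>m Y)" unfolding e using add X Y by simp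
  also have "\<dots> = a \<cdot>\<^sub>m M X + (-1) \<cdot>\<^sub>m M Y" using sm X Y by simp
  also have "\<dots> = a \<cdot>\<^sub>m M X - M Y" using MX MY by (intro eq_matI) auto
  finally show ?thesis .
qed

lemma ch_loewner:
  assumes c: "is_channel dA dB M" and X: "X \<in> carrier_mat dA dA" and Y: "Y \<in> carrier_mat dA dA"
    and le: "loewner_le dA Y (a \<cdot>\<^sub>m X)"
  shows "loewner_le dB (M Y) (a \<cdot>\<^sub>m M X)"
  using ch_psd[OF c le[unfolded loewner_le_def]] ch_lin[OF c X Y] unfolding loewner_le_def by simp

lemma ch_trace: "is_channel dA dB M \<Longrightarrow> X \<in> carrier_mat dA dA \<Longrightarrow> mtrace (M X) = mtrace X"
  unfolding is_channel_def by blast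

lemma dmax_nonneg:
  assumes "psd n \<rho>" "psd n \<omega>" "mtrace \<rho> = 1" "mtrace \<omega> = 1"
  shows "0 \<le> Dmax_st n \<rho> \<omega>"
  using dmax_cases[OF assms] by auto

lemma dmax_ch_ge:
  assumes d: "density dA \<sigma>" and Mc: "is_channel dA dB M" and Nc: "is_channel dA dB N"
  shows "Dmax_st dB (M \<sigma>) (N \<sigma>) \<le> Dmax_ch dA dB M N"
proof -
  have sc: "\<sigma> \<in> carrier_mat dA dA" using d unfolding density_def psd_def by auto
  have mem: "(1, \<sigma>) \<in> {(r, \<rho>). density (r * dA) \<rho>}" using d by simp
  have "(\<lambda>(r, \<rho>). Dmax_st (r * dB) (tensor_id r dA dB M \<rho>) (tensor_id r dA dB N \<rho>)) (1, \<sigma>)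
        \<le> Dmax_ch dA dB M N"
    unfolding Dmax_ch_def by (rule SUP_upper[OF mem])
  then show ?thesis
    using tensor_id_1[of \<sigma> dA M dB, OF sc ch_carrier[OF Mc sc]]
      tensor_id_1[of \<sigma> dA N dB, OF sc ch_carrier[OF Nc sc]] by simp
qed

theorem proposition1:
  fixes sdim :: "'s \<Rightarrow> nat"
    and FS :: "'s \<Rightarrow> complex mat set"
    and FC :: "'s \<Rightarrow> 's \<Rightarrow> (complex mat \<Rightarrow> complex mat) set"
    and A B :: 's
    and \<rho> :: "complex mat"
    and M :: "complex mat \<Rightarrow> complex mat"
  assumes "resource_theory sdim FS FC"
    and "density (sdim A) \<rho>"
    and "is_channel (sdim A) (sdim B) M"
  shows "Dmax_free_st sdim FS B (M \<rho>) \<le> Dmax_free_st sdim FS A \<rho> + Dmax_free_ch sdim FC A B M"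
proof -
  define dA where "dA = sdim A"
  define dB where "dB = sdim B"
  have FSd: "\<And>X \<omega>. \<omega> \<in> FS X \<Longrightarrow> density (sdim X) \<omega>"
    using assms(1) unfolding resource_theory_def by blast
  have FCc: "\<And>X Y N. N \<in> FC X Y \<Longrightarrow> is_channel (sdim X) (sdim Y) N"
    using assms(1) unfolding resource_theory_def by blast
  have clos: "\<And>X Y N \<omega>. N \<in> FC X Y \<Longrightarrow> \<omega> \<in> FS X \<Longrightarrow> N \<omega> \<in> FS Y"
    using assms(1) unfolding resource_theory_def by blast
  have Mc: "is_channel dA dB M" using assms(3) unfolding dA_def dB_def .
  have rd: "density dA \<rho>" using assms(2) unfolding dA_def .
  then have rp: "psd dA \<rho>" and rt: "mtrace \<rho> = 1" unfolding density_def by auto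
  have rc: "\<rho> \<in> carrier_mat dA dA" using rp unfolding psd_def by auto
  have Mrp: "psd dB (M \<rho>)" by (rule ch_psd[OF Mc rp])
  have Mrt: "mtrace (M \<rho>) = 1" using ch_trace[OF Mc rc] rt by simp
  define a where "a = (\<lambda>\<omega>. Dmax_st dA \<rho> \<omega>)"
  define b where "b = (\<lambda>N. Dmax_ch dA dB M N)"
  define lhs where "lhs = Dmax_free_st sdim FS B (M \<rho>)"
  have a0: "0 \<le> a \<omega>" if w: "\<omega> \<in> FS A" for \<omega>
  proof -
    have "density dA \<omega>" using FSd[OF w] unfolding dA_def .
    then show ?thesis unfolding a_def using dmax_nonneg[OF rp _ rt] unfolding density_def by auto
  qed
  have b0: "0 \<le> b N" if Nf: "N \<in> FC A B" for N
  proof -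
    have Nc: "is_channel dA dB N" using FCc[OF Nf] unfolding dA_def dB_def .
    have "0 \<le> Dmax_st dB (M \<rho>) (N \<rho>)"
      using dmax_nonneg[OF Mrp ch_psd[OF Nc rp] Mrt] ch_trace[OF Nc rc] rt by simp
    also have "\<dots> \<le> b N" unfolding b_def by (rule dmax_ch_ge[OF rd Mc Nc])
    finally show ?thesis .
  qed
  have key: "lhs \<le> a \<omega> + b N" if w: "\<omega> \<in> FS A" and Nf: "N \<in> FC A B" for \<omega> N
  proof -
    have wd: "density dA \<omega>" using FSd[OF w] unfolding dA_def .
    then have wp: "psd dA \<omega>" and wt: "mtrace \<omega> = 1" unfolding density_def by auto
    have wc: "\<omega> \<in> carrier_mat dA dA" using wp unfolding psd_def by auto
    have Nc: "is_channel dA dB N" using FCc[OF Nf] unfolding dA_def dB_def .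
    have Nw: "N \<omega> \<in> FS B" by (rule clos[OF Nf w])
    have Nwd: "density dB (N \<omega>)" using FSd[OF Nw] unfolding dB_def .
    then have Nwp: "psd dB (N \<omega>)" and Nwt: "mtrace (N \<omega>) = 1" unfolding density_def by auto
    have Mwp: "psd dB (M \<omega>)" by (rule ch_psd[OF Mc wp])
    have Mwt: "mtrace (M \<omega>) = 1" using ch_trace[OF Mc wc] wt by simp
    have c1: "Dmax_st dB (M \<omega>) (N \<omega>) \<le> b N" unfolding b_def by (rule dmax_ch_ge[OF wd Mc Nc])
    have up: "lhs \<le> Dmax_st dB (M \<rho>) (N \<omega>)"
      unfolding lhs_def Dmax_free_st_def dB_def by (rule INF_lower[OF Nw])
    have bn: "0 \<le> b N" by (rule b0[OF Nf])
    show ?thesis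
    proof (cases "a \<omega> = \<infinity> \<or> Dmax_st dB (M \<omega>) (N \<omega>) = \<infinity>")
      case True
      then have "a \<omega> = \<infinity> \<or> b N = \<infinity>" using c1 by auto
      then show ?thesis
      proof (elim disjE)
        assume "a \<omega> = \<infinity>"
        then show ?thesis by simp
      next
        assume "b N = \<infinity>"
        then show ?thesis by simp
      qed
    next
      case False
      then obtain L where L1: "L \<ge> 1" and aL: "a \<omega> = ereal (log 2 L)"
        and lL: "loewner_le dA \<rho> (complex_of_real L \<cdot>\<^sub>m \<omega>)"
        using dmax_cases[OF rp wp rt wt] unfolding a_def by auto
      from False obtain K where K1: "K \<ge> 1" and cK: "Dmax_st dB (M \<omega>) (N \<omega>) = ereal (log 2 K)"
        and lK: "loewner_le dB (M \<omega>) (complex_of_real K \<cdot>\<^sub>m N \<omega>)"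
        using dmax_cases[OF Mwp Nwp Mwt Nwt] by auto
      have l1: "loewner_le dB (M \<rho>) (complex_of_real L \<cdot>\<^sub>m M \<omega>)"
        by (rule ch_loewner[OF Mc wc rc lL])
      have q1: "\<forall>x. Re (qf dB (M \<rho>) x) \<le> L * Re (qf dB (M \<omega>) x)"
        using l1 loewner_iff[OF Mrp Mwp] by blast
      have q2: "\<forall>x. Re (qf dB (M \<omega>) x) \<le> K * Re (qf dB (N \<omega>) x)"
        using lK loewner_iff[OF Mwp Nwp] by blast
      have "\<forall>x. Re (qf dB (M \<rho>) x) \<le> (L * K) * Re (qf dB (N \<omega>) x)"
      proof
        fix x
        have "Re (qf dB (M \<rho>) x) \<le> L * Re (qf dB (M \<omega>) x)" using q1 by blast
        also have "\<dots> \<le> L * (K * Re (qf dB (N \<omega>) x))"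
          using q2 L1 by (intro mult_left_mono) auto
        finally show "Re (qf dB (M \<rho>) x) \<le> (L * K) * Re (qf dB (N \<omega>) x)" by (simp add: mult.assoc)
      qed
      then have l3: "loewner_le dB (M \<rho>) (complex_of_real (L * K) \<cdot>\<^sub>m N \<omega>)"
        using loewner_iff[OF Mrp Nwp] by blast
      have "lhs \<le> ereal (log 2 (L * K))"
        using up dmax_upper[OF Mrp Nwp Mrt Nwt l3] by (rule order_trans)
      also have "\<dots> = ereal (log 2 L) + ereal (log 2 K)"
        using L1 K1 by (simp add: log_mult)
      also have "\<dots> \<le> a \<omega> + b N"
      proof -
        have "ereal (log 2 K) \<le> b N" using c1 cK by simp
        then have "ereal (log 2 L) + ereal (log 2 K) \<le> ereal (log 2 L) + b N" by (rule add_left_mono)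
        then show ?thesis unfolding aL .
      qed
      finally show ?thesis .
    qed
  qed
  show ?thesis
  proof (cases "FS A = {} \<or> FC A B = {}")
    case True
    then show ?thesis unfolding Dmax_free_st_def Dmax_free_ch_def
      by (auto simp: top_ereal_def)
  next
    case False
    then have neA: "FS A \<noteq> {}" and neB: "FC A B \<noteq> {}" by auto
    have ib0: "0 \<le> (INF N\<in>FC A B. b N)" using b0 by (intro INF_greatest) auto
    then have ibm: "(INF N\<in>FC A B. b N) \<noteq> - \<infinity>" by auto
    have "(INF \<omega>\<in>FS A. a \<omega>) + (INF N\<in>FC A B. b N) = (INF \<omega>\<in>FS A. a \<omega> + (INF N\<in>FC A B. b N))"
      by (rule INF_ereal_add_left[OF neA ibm a0, symmetric])
    also have "\<dots> = (INF \<omega>\<in>FS A. (INF N\<in>FC A B. a \<omega> + b N))"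
    proof (rule INF_cong[OF refl])
      fix \<omega> assume w: "\<omega> \<in> FS A"
      have "a \<omega> \<noteq> - \<infinity>" using a0[OF w] by auto
      then show "a \<omega> + (INF N\<in>FC A B. b N) = (INF N\<in>FC A B. a \<omega> + b N)"
        by (rule INF_ereal_add_right[OF neB _ b0, symmetric])
    qed
    finally have eq: "(INF \<omega>\<in>FS A. a \<omega>) + (INF N\<in>FC A B. b N) = (INF \<omega>\<in>FS A. (INF N\<in>FC A B. a \<omega> + b N))" .
    have "lhs \<le> (INF \<omega>\<in>FS A. (INF N\<in>FC A B. a \<omega> + b N))"
      using key by (intro INF_greatest) auto
    then have fin: "lhs \<le> (INF \<omega>\<in>FS A. a \<omega>) + (INF N\<in>FC A B. b N)" unfolding eq .
    show ?thesis using fin unfolding lhs_def a_def b_def Dmax_free_st_def Dmax_free_ch_def dA_def dB_def by simp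
  qed
qed

end
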